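(* Let $k\ge2$ be an integer and $n\in\mathbb Z$. Then $L_k^{(n)}L_k^{(0)}=L_k^{(0)}L_k^{(n)}$.
   Context: Fix an integer $k\ge2$. Let $Q_k$ be the $k\times k$ matrix whose first row is all ones, with $(Q_k)_{i+1,i}=1$ for $1\le i\le k-1$ and all other entries $0$, and for $r\in\mathbb Z$ let $Q_k^r$ denote its $r$-th power. The generalized Lucas sequence of order $k$, $(l_{k,n})_{n\in\mathbb Z}$, is the two-sided sequence satisfying $l_{k,n+k}=l_{k,n+k-1}+\dots+l_{k,n}$ for all $n\in\mathbb Z$ with initial values $l_{k,r}=\operatorname{trace}(Q_k^r)$ for $0\le r\le k-1$ (so $l_{k,0}=k$ and $l_{k,r}=2^r-1$ for $1\le r\le k-1$). For $n\in\mathbb Z$ the generalized Lucas matrix $L_k^{(n)}$ is the $k\times k$ matrix with entries $(L_k^{(n)})_{i,1}=l_{k,k+n-i}$ and $(L_k^{(n)})_{i,j}=\sum_{m=n-i+j-1}^{k+n-i-1} l_{k,m}$ for $2\le j\le k$, $1\le i\le k$. *)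

theory Defs
  imports "Jordan_Normal_Form.Matrix"
begin

(* The generalized Lucas sequence of order k, as a two-sided sequence Z -> Z:
   the unique f with f(n+k) = f(n+k-1) + ... + f(n) for all integers n,
   f 0 = k and f r = 2^r - 1 for 1 <= r <= k-1 (= trace (Q_k^r)). *)
definition gen_lucas :: "nat \<Rightarrow> int \<Rightarrow> int" where
  "gen_lucas k = (THE f. (\<forall>n::int. f (n + int k) = (\<Sum>j<k. f (n + int j)))
                       \<and> f 0 = int k
                       \<and> (\<forall>r::nat. 1 \<le> r \<and> r < k \<longrightarrow> f (int r) = 2 ^ r - 1))"

(* The generalized Lucas matrix L_k^{(n)}, k x k, with 0-based indices
   i' = i - 1, j' = j - 1 relative to the paper's 1-based (i,j). *)
definition lucas_mat :: "nat \<Rightarrow> int \<Rightarrow> int mat" where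
  "lucas_mat k n = mat k k (\<lambda>(i', j').
     (let i = int i' + 1; j = int j' + 1 in
      if j = 1 then gen_lucas k (int k + n - i)
      else (\<Sum>m\<in>{n - i + j - 1 .. int k + n - i - 1}. gen_lucas k m)))"

end

theory Submission imports Defs begin

function lf :: "nat \<Rightarrow> int \<Rightarrow> int" where
"lf k n = (if 0 \<le> n \<and> n < int k then (if n = 0 then int k else 2 ^ nat n - 1)
  else if k = 0 then 0
  else if n \<ge> int k then (\<Sum>j\<in>{1..k}. lf k (n - int j))
  else lf k (n + int k) - (\<Sum>j\<in>{1..<k}. lf k (n + int j)))"
  by auto
termination
  by (relation "measure (\<lambda>(k,n). if n \<ge> 0 then nat n else k + nat (-n))") auto

declare lf.simps[simp del]

definition Pk :: "nat \<Rightarrow> (int \<Rightarrow> int) \<Rightarrow> bool" where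
"Pk k f = ((\<forall>n::int. f (n + int k) = (\<Sum>j<k. f (n + int j)))
                       \<and> f 0 = int k
                       \<and> (\<forall>r::nat. 1 \<le> r \<and> r < k \<longrightarrow> f (int r) = 2 ^ r - 1))"

lemma lf_rec:
  assumes "k \<ge> 1"
  shows "lf k (n + int k) = (\<Sum>j<k. lf k (n + int j))"
proof (cases "n \<ge> 0")
  case True
  have "lf k (n + int k) = (\<Sum>j\<in>{1..k}. lf k (n + int k - int j))"
    using True assms by (subst lf.simps) auto
  also have "\<dots> = (\<Sum>j<k. lf k (n + int j))"
    by (rule sum.reindex_bij_witness[where i="\<lambda>j. k - j" and j="\<lambda>j. k - j"]) (auto simp: of_nat_diff algebra_simps)
  finally show ?thesis .
next
  case False
  have "lf k n = lf k (n + int k) - (\<Sum>j\<in>{1..<k}. lf k (n + int j))"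
    using False assms by (subst lf.simps) auto
  moreover have "(\<Sum>j<k. lf k (n + int j)) = lf k n + (\<Sum>j\<in>{1..<k}. lf k (n + int j))"
  proof -
    have "{..<k} = insert 0 {1..<k}" using assms by auto
    then show ?thesis by simp
  qed
  ultimately show ?thesis by simp
qed

lemma lf_P: assumes "k \<ge> 1" shows "Pk k (lf k)"
  unfolding Pk_def using lf_rec[OF assms]
  by (auto simp: lf.simps[of k 0] lf.simps[of k "int r" for r] assms)

lemma P_unique:
  assumes "k \<ge> 1" "Pk k f" "Pk k g"
  shows "f n = g n"
proof (induction "if n \<ge> 0 then nat n else k + nat (-n)" arbitrary: n rule: less_induct)
  case less
  have rf: "\<And>n. f (n + int k) = (\<Sum>j<k. f (n + int j))" and rg: "\<And>n. g (n + int k) = (\<Sum>j<k. g (n + int j))"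
    using assms unfolding Pk_def by auto
  show ?case
  proof (cases "0 \<le> n \<and> n < int k")
    case T1: True
    show ?thesis
    proof (cases "n = 0")
      case True then show ?thesis using assms unfolding Pk_def by simp
    next
      case False
      define r where "r = nat n"
      have nr: "n = int r" "1 \<le> r" "r < k" using T1 False r_def by auto
      show ?thesis using assms nr unfolding Pk_def by simp
    qed
  next
    case False
    show ?thesis
    proof (cases "n \<ge> int k")
      case True
      have "f n = (\<Sum>j<k. f (n - int k + int j))" using rf[of "n - int k"] by simp
      also have "\<dots> = (\<Sum>j<k. g (n - int k + int j))"
        by (rule sum.cong[OF refl], rule less) (use True assms in auto)
      also have "\<dots> = g n" using rg[of "n - int k"] by simp
      finally show ?thesis .
    next
      case F2: False
      have hn: "n < 0" using False F2 by auto
      have sp: "{..<k} = insert 0 {1..<k}" using assms by auto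
      have "f n = f (n + int k) - (\<Sum>j\<in>{1..<k}. f (n + int j))" using rf[of n] sp by simp
      also have "\<dots> = g (n + int k) - (\<Sum>j\<in>{1..<k}. g (n + int j))"
        using hn assms by (intro arg_cong2[where f="(-)"] sum.cong refl less) auto
      also have "\<dots> = g n" using rg[of n] sp by simp
      finally show ?thesis .
    qed
  qed
qed

lemma gen_lucas_eq: assumes "k \<ge> 1" shows "gen_lucas k = lf k"
proof -
  have "gen_lucas k = (THE f. Pk k f)" unfolding gen_lucas_def Pk_def by simp
  also have "\<dots> = lf k"
    by (rule the_equality) (use lf_P[OF assms] P_unique[OF assms] in auto)
  finally show ?thesis .
qed

lemma gen_lucas_rec: assumes "k \<ge> 1" shows "gen_lucas k (n + int k) = (\<Sum>j<k. gen_lucas k (n + int j))"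
  using gen_lucas_eq[OF assms] lf_rec[OF assms] by simp


definition Lm :: "(int \<Rightarrow> int) \<Rightarrow> nat \<Rightarrow> int \<Rightarrow> int mat" where
"Lm f k n = mat k k (\<lambda>(i,j). \<Sum>t\<in>{j..<k}. f (n - 1 - int i + int t))"

definition Qm :: "nat \<Rightarrow> int mat" where
"Qm k = mat k k (\<lambda>(i,j). if i = 0 \<or> i = j + 1 then 1 else 0)"

lemma Lm_carrier[simp]: "Lm f k n \<in> carrier_mat k k" by (simp add: Lm_def)
lemma Qm_carrier[simp]: "Qm k \<in> carrier_mat k k" by (simp add: Qm_def)

lemma sum_int_shift:
  "(\<Sum>m\<in>{c + int j .. c + int k - 1}. g m) = (\<Sum>t\<in>{j..<k}. g (c + int t))"
proof -
  have inj: "inj_on (\<lambda>t. c + int t) {j..<k}" by (auto simp: inj_on_def)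
  have img: "(\<lambda>t. c + int t) ` {j..<k} = {c + int j .. c + int k - 1}"
  proof
    show "(\<lambda>t. c + int t) ` {j..<k} \<subseteq> {c + int j .. c + int k - 1}" by auto
    show "{c + int j .. c + int k - 1} \<subseteq> (\<lambda>t. c + int t) ` {j..<k}"
    proof
      fix m assume m: "m \<in> {c + int j .. c + int k - 1}"
      then have "m = c + int (nat (m - c))" "nat (m - c) \<in> {j..<k}" by auto
      then show "m \<in> (\<lambda>t. c + int t) ` {j..<k}" by blast
    qed
  qed
  show ?thesis using sum.reindex[OF inj, of g] img by simp
qed

lemma mult_entry:
  assumes "A \<in> carrier_mat k k" "B \<in> carrier_mat k k" "i < k" "j < k"
  shows "(A * B) $$ (i,j) = (\<Sum>l<k. A $$ (i,l) * B $$ (l,j))"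
  using assms by (simp add: index_mult_mat scalar_prod_def atLeast0LessThan)

lemma lucas_Lm:
  assumes "k \<ge> 1"
  shows "lucas_mat k n = Lm (gen_lucas k) k n"
proof (rule eq_matI)
  show "dim_row (lucas_mat k n) = dim_row (Lm (gen_lucas k) k n)" by (simp add: lucas_mat_def Lm_def)
  show "dim_col (lucas_mat k n) = dim_col (Lm (gen_lucas k) k n)" by (simp add: lucas_mat_def Lm_def)
  fix i j assume i: "i < dim_row (Lm (gen_lucas k) k n)" and j: "j < dim_col (Lm (gen_lucas k) k n)"
  then have ik: "i < k" and jk: "j < k" by (auto simp: Lm_def)
  show "lucas_mat k n $$ (i, j) = Lm (gen_lucas k) k n $$ (i, j)"
  proof (cases "j = 0")
    case True
    have "gen_lucas k (int k + n - (int i + 1)) = gen_lucas k ((n - 1 - int i) + int k)"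
      by (simp add: algebra_simps)
    also have "\<dots> = (\<Sum>t<k. gen_lucas k (n - 1 - int i + int t))" by (rule gen_lucas_rec[OF assms])
    finally show ?thesis using ik jk True by (simp add: lucas_mat_def Lm_def Let_def atLeast0LessThan)
  next
    case False
    have e: "{n - (int i + 1) + (int j + 1) - 1 .. int k + n - (int i + 1) - 1}
       = {(n - 1 - int i) + int j .. (n - 1 - int i) + int k - 1}" by (simp add: algebra_simps)
    have "lucas_mat k n $$ (i,j) = (\<Sum>m\<in>{n - (int i + 1) + (int j + 1) - 1 .. int k + n - (int i + 1) - 1}. gen_lucas k m)"
      using ik jk False by (simp add: lucas_mat_def Let_def)
    also have "\<dots> = (\<Sum>t\<in>{j..<k}. gen_lucas k (n - 1 - int i + int t))"
      by (simp only: e sum_int_shift)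
    finally show ?thesis using ik jk by (simp add: Lm_def)
  qed
qed

lemma rec_back:
  assumes rec: "\<And>n. f (n + int k) = (\<Sum>j<k. f (n + int j))"
  shows "(\<Sum>l<k. f (N - 1 - int l)) = f N"
proof -
  have "f N = (\<Sum>j<k. f (N - int k + int j))" using rec[of "N - int k"] by simp
  also have "\<dots> = (\<Sum>l<k. f (N - 1 - int l))"
    by (rule sum.reindex_bij_witness[where i="\<lambda>j. k - 1 - j" and j="\<lambda>j. k - 1 - j"])
       (auto simp: of_nat_diff algebra_simps)
  finally show ?thesis by simp
qed

lemma Q_entry:
  assumes "M \<in> carrier_mat k k" "i < k" "j < k"
  shows "(Qm k * M) $$ (i,j) = (if i = 0 then (\<Sum>l<k. M $$ (l,j)) else M $$ (i - 1, j))"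
proof -
  have "(Qm k * M) $$ (i,j) = (\<Sum>l<k. Qm k $$ (i,l) * M $$ (l,j))"
    using assms by (intro mult_entry) auto
  also have "\<dots> = (\<Sum>l<k. (if i = 0 \<or> i = l + 1 then 1 else 0) * M $$ (l,j))"
    using assms by (intro sum.cong) (auto simp: Qm_def)
  also have "\<dots> = (if i = 0 then (\<Sum>l<k. M $$ (l,j)) else M $$ (i - 1, j))"
  proof (cases "i = 0")
    case False
    have "(\<Sum>l<k. (if i = 0 \<or> i = l + 1 then 1 else 0) * M $$ (l,j)) = (\<Sum>l<k. if l = i - 1 then M $$ (l,j) else 0)"
      using False by (intro sum.cong) auto
    also have "\<dots> = M $$ (i - 1, j)" using assms by (simp add: sum.delta)
    finally show ?thesis using False by simp
  qed simp
  finally show ?thesis .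
qed

lemma Lm_step:
  assumes rec: "\<And>n. f (n + int k) = (\<Sum>j<k. f (n + int j))"
  shows "Lm f k (n + 1) = Qm k * Lm f k n"
proof (rule eq_matI)
  show "dim_row (Lm f k (n + 1)) = dim_row (Qm k * Lm f k n)" by (simp add: Lm_def Qm_def)
  show "dim_col (Lm f k (n + 1)) = dim_col (Qm k * Lm f k n)" by (simp add: Lm_def Qm_def)
  fix i j assume "i < dim_row (Qm k * Lm f k n)" "j < dim_col (Qm k * Lm f k n)"
  then have ik: "i < k" and jk: "j < k" by (auto simp: Lm_def Qm_def)
  have Qe: "(Qm k * Lm f k n) $$ (i,j) = (if i = 0 then (\<Sum>l<k. Lm f k n $$ (l,j)) else Lm f k n $$ (i - 1, j))"
    by (rule Q_entry) (use ik jk in auto)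
  show "Lm f k (n + 1) $$ (i, j) = (Qm k * Lm f k n) $$ (i, j)"
  proof (cases "i = 0")
    case True
    have "(\<Sum>l<k. Lm f k n $$ (l,j)) = (\<Sum>l<k. \<Sum>t\<in>{j..<k}. f (n - 1 - int l + int t))"
      using jk by (intro sum.cong) (auto simp: Lm_def)
    also have "\<dots> = (\<Sum>t\<in>{j..<k}. \<Sum>l<k. f ((n + int t) - 1 - int l))"
      by (subst sum.swap) (simp add: algebra_simps)
    also have "\<dots> = (\<Sum>t\<in>{j..<k}. f (n + int t))"
      by (intro sum.cong refl rec_back[OF rec])
    finally show ?thesis using Qe True ik jk by (simp add: Lm_def)
  next
    case False
    then have "int (i - 1) = int i - 1" by auto
    then show ?thesis using Qe False ik jk by (simp add: Lm_def algebra_simps)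
  qed
qed

lemma sum_two_delta:
  fixes g :: "nat \<Rightarrow> int"
  assumes "k \<ge> 1"
  shows "(\<Sum>l<k. g l * (if l = 0 \<or> l = j + 1 then 1 else 0)) = g 0 + (if j + 1 < k then g (j + 1) else 0)"
proof -
  have "(\<Sum>l<k. g l * (if l = 0 \<or> l = j + 1 then 1 else 0)) = (\<Sum>l<k. (if l = 0 then g l else 0) + (if l = j + 1 then g l else 0))"
    by (intro sum.cong) auto
  also have "\<dots> = (\<Sum>l<k. if l = 0 then g l else 0) + (\<Sum>l<k. if l = j + 1 then g l else 0)"
    by (rule sum.distrib)
  also have "\<dots> = g 0 + (if j + 1 < k then g (j + 1) else 0)"
    using assms by (simp add: sum.delta)
  finally show ?thesis .
qed

lemma Lm_comm1:
  assumes rec: "\<And>n. f (n + int k) = (\<Sum>j<k. f (n + int j))" and k: "k \<ge> 1"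
  shows "Lm f k 1 = Lm f k 0 * Qm k"
proof (rule eq_matI)
  show "dim_row (Lm f k 1) = dim_row (Lm f k 0 * Qm k)" by (simp add: Lm_def Qm_def)
  show "dim_col (Lm f k 1) = dim_col (Lm f k 0 * Qm k)" by (simp add: Lm_def Qm_def)
  fix i j assume "i < dim_row (Lm f k 0 * Qm k)" "j < dim_col (Lm f k 0 * Qm k)"
  then have ik: "i < k" and jk: "j < k" by (auto simp: Lm_def Qm_def)
  have "(Lm f k 0 * Qm k) $$ (i,j) = (\<Sum>l<k. Lm f k 0 $$ (i,l) * Qm k $$ (l,j))"
    using ik jk by (intro mult_entry) auto
  also have "\<dots> = (\<Sum>l<k. Lm f k 0 $$ (i,l) * (if l = 0 \<or> l = j + 1 then 1 else 0))"
    using jk by (intro sum.cong) (auto simp: Qm_def)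
  also have "\<dots> = Lm f k 0 $$ (i,0) + (if j + 1 < k then Lm f k 0 $$ (i,j+1) else 0)"
    by (rule sum_two_delta[OF k])
  also have "\<dots> = f (-1 - int i + int k) + (\<Sum>t\<in>{Suc j..<k}. f (-1 - int i + int t))"
  proof -
    have "Lm f k 0 $$ (i,0) = (\<Sum>t<k. f (-1 - int i + int t))"
      using ik k by (simp add: Lm_def atLeast0LessThan)
    also have "\<dots> = f (-1 - int i + int k)" using rec[of "-1 - int i"] by simp
    finally have a: "Lm f k 0 $$ (i,0) = f (-1 - int i + int k)" .
    have b: "(if j + 1 < k then Lm f k 0 $$ (i,j+1) else 0) = (\<Sum>t\<in>{Suc j..<k}. f (-1 - int i + int t))"
      using ik jk by (auto simp: Lm_def)
    show ?thesis using a b by simp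
  qed
  also have "\<dots> = (\<Sum>t\<in>{Suc j..<Suc k}. f (-1 - int i + int t))"
    using jk by (simp add: sum.atLeastLessThan_Suc)
  also have "\<dots> = (\<Sum>t\<in>{j..<k}. f (- int i + int t))"
    by (subst sum.shift_bounds_Suc_ivl) (simp add: algebra_simps)
  also have "\<dots> = Lm f k 1 $$ (i,j)" using ik jk by (simp add: Lm_def)
  finally show "Lm f k 1 $$ (i,j) = (Lm f k 0 * Qm k) $$ (i,j)" by simp
qed

lemma Q_cancel:
  assumes A: "A \<in> carrier_mat k k" and B: "B \<in> carrier_mat k k" and eq: "Qm k * A = Qm k * B"
  shows "A = B"
proof (rule eq_matI)
  show "dim_row A = dim_row B" "dim_col A = dim_col B" using A B by auto
  fix i j assume "i < dim_row B" "j < dim_col B"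
  then have ik: "i < k" and jk: "j < k" using B by auto
  have rows: "A $$ (l,j) = B $$ (l,j)" if "l + 1 < k" for l
  proof -
    have "(Qm k * A) $$ (l+1,j) = (Qm k * B) $$ (l+1,j)" using eq by simp
    then show ?thesis using Q_entry[OF A, of "l+1" j] Q_entry[OF B, of "l+1" j] that jk by simp
  qed
  show "A $$ (i,j) = B $$ (i,j)"
  proof (cases "i + 1 < k")
    case True then show ?thesis using rows by simp
  next
    case False
    then have ie: "i = k - 1" using ik by simp
    have "(Qm k * A) $$ (0,j) = (Qm k * B) $$ (0,j)" using eq by simp
    then have s: "(\<Sum>l<k. A $$ (l,j)) = (\<Sum>l<k. B $$ (l,j))"
      using Q_entry[OF A, of 0 j] Q_entry[OF B, of 0 j] ik jk by simp
    have kk: "k = Suc (k - 1)" using ik by simp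
    have "(\<Sum>l<k. A $$ (l,j)) = (\<Sum>l<k-1. A $$ (l,j)) + A $$ (k-1,j)"
      by (metis kk sum.lessThan_Suc)
    moreover have "(\<Sum>l<k. B $$ (l,j)) = (\<Sum>l<k-1. B $$ (l,j)) + B $$ (k-1,j)"
      by (metis kk sum.lessThan_Suc)
    moreover have "(\<Sum>l<k-1. A $$ (l,j)) = (\<Sum>l<k-1. B $$ (l,j))"
      by (intro sum.cong refl rows) auto
    ultimately show ?thesis using s ie by simp
  qed
qed

lemma Lm_commute:
  assumes rec: "\<And>n. f (n + int k) = (\<Sum>j<k. f (n + int j))" and k: "k \<ge> 1"
  shows "Lm f k n * Lm f k 0 = Lm f k 0 * Lm f k n"
proof -
  let ?Q = "Qm k" and ?L = "Lm f k" 
  have QL: "?Q * ?L 0 = ?L 0 * ?Q" using Lm_step[OF rec, of 0] Lm_comm1[OF rec k] by simp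
  have as: "\<And>a b. ?Q * ?L a * ?L b = ?Q * (?L a * ?L b)"
    "\<And>a b. ?L b * ?Q * ?L a = ?L b * (?Q * ?L a)"
    "\<And>a b. ?L b * ?L a * ?Q = ?L b * (?L a * ?Q)"
    "\<And>a b. ?Q * ?L a * ?Q = ?Q * (?L a * ?Q)"
    by (rule assoc_mult_mat[of _ k k _ k _ k], auto)+
  show ?thesis
  proof (induction n rule: int_induct[where k=0])
    case base then show ?case by simp
  next
    case (step1 i)
    have "?L (i+1) * ?L 0 = ?Q * (?L i * ?L 0)" by (simp add: Lm_step[OF rec] as)
    also have "\<dots> = (?Q * ?L 0) * ?L i" using step1(2) by (simp add: as)
    also have "\<dots> = ?L 0 * (?Q * ?L i)" by (simp add: QL as)
    also have "\<dots> = ?L 0 * ?L (i+1)" by (simp add: Lm_step[OF rec] as)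
    finally show ?case .
  next
    case (step2 i)
    have "?Q * (?L (i-1) * ?L 0) = ?L i * ?L 0" using Lm_step[OF rec, of "i-1"] by (simp add: as)
    also have "\<dots> = ?L 0 * ?L i" by (rule step2(2))
    also have "\<dots> = ?L 0 * (?Q * ?L (i-1))" using Lm_step[OF rec, of "i-1"] by simp
    also have "\<dots> = (?Q * ?L 0) * ?L (i-1)" by (simp add: QL as)
    also have "\<dots> = ?Q * (?L 0 * ?L (i-1))" by (simp add: as)
    finally show ?case by (rule Q_cancel[OF mult_carrier_mat[OF Lm_carrier Lm_carrier] mult_carrier_mat[OF Lm_carrier Lm_carrier]])
  qed
qed

theorem corollary1:
  fixes k :: nat and n :: int
  assumes "k \<ge> 2"
  shows "lucas_mat k n * lucas_mat k 0 = lucas_mat k 0 * lucas_mat k n"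
proof -
  have k: "k \<ge> 1" using assms by simp
  show ?thesis unfolding lucas_Lm[OF k] by (rule Lm_commute[OF gen_lucas_rec[OF k] k])
qed

end
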